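(* Let $n\ge 1$. The subuniverses of $\mathbf{P\L}_n$ are exactly the sets $$P_k=\{0,\tfrac{\ell}{n},\tfrac{2\ell}{n},\dots,\tfrac{(k-1)\ell}{n},1\}=\{\tfrac{i}{k}: 0\le i\le k\},$$ one for each factorization $n=k\cdot\ell$ with $k,\ell$ positive integers. Each such subalgebra is isomorphic to $\mathbf{P\L}_k$. Consequently the lattice of subalgebras of $\mathbf{P\L}_n$ is isomorphic to the lattice of positive divisors of $n$.
   Context: For $n\ge 1$, the $(n+1)$-element positive MV-chain is the algebra $\mathbf{P\L}_n=\langle\{0,\tfrac1n,\dots,\tfrac{n-1}{n},1\},\wedge,\vee,\odot,\oplus,0,1\rangle$. Here $\wedge=\min$, $\vee=\max$, $x\odot y=\max\{0,x+y-1\}$ and $x\oplus y=\min\{1,x+y\}$. It is the negation-free reduct of the finite MV-chain $\text{\L}_n$. *)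

theory Defs
  imports Complex_Main
begin

definition mv_odot :: "real \<Rightarrow> real \<Rightarrow> real" where
  "mv_odot x y = max 0 (x + y - 1)"

definition mv_oplus :: "real \<Rightarrow> real \<Rightarrow> real" where
  "mv_oplus x y = min 1 (x + y)"

definition PL :: "nat \<Rightarrow> real set" where
  "PL n = {real i / real n | i. i \<le> n}"

definition subuniverse :: "nat \<Rightarrow> real set \<Rightarrow> bool" where
  "subuniverse n S \<longleftrightarrow> S \<subseteq> PL n \<and> 0 \<in> S \<and> 1 \<in> S \<and>
     (\<forall>x\<in>S. \<forall>y\<in>S. min x y \<in> S \<and> max x y \<in> S \<and> mv_odot x y \<in> S \<and> mv_oplus x y \<in> S)"

text \<open>An isomorphism between two subalgebras (given by their universes, carrying the
  restricted operations) of the algebra of [0,1] with min, max, odot, oplus, 0, 1.\<close>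

definition pmv_iso :: "real set \<Rightarrow> real set \<Rightarrow> (real \<Rightarrow> real) \<Rightarrow> bool" where
  "pmv_iso A B f \<longleftrightarrow> bij_betw f A B \<and> f 0 = 0 \<and> f 1 = 1 \<and>
     (\<forall>x\<in>A. \<forall>y\<in>A. f (min x y) = min (f x) (f y) \<and> f (max x y) = max (f x) (f y) \<and>
        f (mv_odot x y) = mv_odot (f x) (f y) \<and> f (mv_oplus x y) = mv_oplus (f x) (f y))"

end

theory Submission
  imports Defs
begin

lemma PL_nonneg: "x \<in> PL n \<Longrightarrow> 0 \<le> x \<and> x \<le> 1"
  unfolding PL_def by (auto simp: divide_le_eq_1)

lemma PL_finite: "finite (PL n)"
proof -
  have "PL n = (\<lambda>i. real i / real n) ` {..n}" unfolding PL_def by auto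
  thus ?thesis by simp
qed

lemma L1:
  assumes "0 < k" "0 < l" "n = k * l"
  shows "{real (i * l) / real n | i. i \<le> k} = PL k"
proof -
  have "\<And>i. real (i * l) / real n = real i / real k"
    using assms by (simp add: field_simps)
  thus ?thesis unfolding PL_def by simp
qed

lemma odot_PL:
  assumes "0 < k" "i \<le> k" "j \<le> k"
  shows "mv_odot (real i / real k) (real j / real k) = real (i + j - k) / real k"
proof (cases "i + j \<ge> k")
  case True
  hence "real (i + j - k) = real i + real j - real k" by simp
  thus ?thesis using assms True unfolding mv_odot_def
    by (simp add: field_simps)
next
  case False
  hence "real i + real j - real k < 0" by simp
  hence "real i / real k + real j / real k - 1 < 0" using assms
    by (simp add: field_simps)
  thus ?thesis using False unfolding mv_odot_def by simp
qed

lemma oplus_PL: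
  assumes "0 < k" "i \<le> k" "j \<le> k"
  shows "mv_oplus (real i / real k) (real j / real k) = real (min k (i + j)) / real k"
proof (cases "i + j \<ge> k")
  case True
  hence "real i / real k + real j / real k \<ge> 1" using assms
    by (simp add: field_simps)
  thus ?thesis using True assms unfolding mv_oplus_def by simp
next
  case False
  hence "real i / real k + real j / real k \<le> 1" using assms
    by (simp add: field_simps)
  thus ?thesis using False assms unfolding mv_oplus_def by (simp add: add_divide_distrib)
qed

lemma PL_sub: assumes "0 < k" "k dvd n" "0 < n" shows "PL k \<subseteq> PL n"
proof
  fix x assume "x \<in> PL k"
  then obtain i where i: "i \<le> k" "x = real i / real k" unfolding PL_def by auto
  obtain l where l: "n = k * l" using assms by auto
  have "0 < l" using assms l by (metis gr0I mult_0_right less_irrefl)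
  hence "x = real (i * l) / real n" using i l assms by (simp add: field_simps)
  moreover have "i * l \<le> n" using i l by simp
  ultimately show "x \<in> PL n" unfolding PL_def by blast
qed

lemma sub_PL: assumes "0 < k" "k dvd n" "0 < n" shows "subuniverse n (PL k)"
  unfolding subuniverse_def
proof (intro conjI ballI)
  show "PL k \<subseteq> PL n" using PL_sub assms .
  have "0 = real (0::nat) / real k" by simp
  thus "0 \<in> PL k" unfolding PL_def by blast
  have "1 = real k / real k" using assms by simp
  thus "1 \<in> PL k" unfolding PL_def by blast
  fix x y assume x: "x \<in> PL k" and y: "y \<in> PL k"
  then obtain i j where ij: "i \<le> k" "x = real i / real k" "j \<le> k" "y = real j / real k"
    unfolding PL_def by auto
  show "min x y \<in> PL k" using x y by (simp add: min_def)
  show "max x y \<in> PL k" using x y by (simp add: max_def)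
  show "mv_odot x y \<in> PL k" using odot_PL[OF assms(1) ij(1) ij(3)] ij
    unfolding PL_def by auto
  show "mv_oplus x y \<in> PL k" using oplus_PL[OF assms(1) ij(1) ij(3)] ij
    unfolding PL_def by auto
qed

lemma PL_dvd: assumes "0 < k" "0 < k'" shows "PL k \<subseteq> PL k' \<longleftrightarrow> k dvd k'"
proof
  assume "k dvd k'" thus "PL k \<subseteq> PL k'" using PL_sub assms by blast
next
  assume h: "PL k \<subseteq> PL k'"
  have "1 / real k = real (1::nat) / real k" by simp
  moreover have "(1::nat) \<le> k" using assms by simp
  ultimately have "1 / real k \<in> PL k" unfolding PL_def by blast
  hence "1 / real k \<in> PL k'" using h by blast
  then obtain i where "1 / real k = real i / real k'" unfolding PL_def by auto
  hence "real k' = real i * real k" using assms by (simp add: field_simps)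
  hence "k' = i * k" by (metis of_nat_eq_iff of_nat_mult)
  thus "k dvd k'" by simp
qed

lemma classify:
  assumes "subuniverse n S"
  shows "\<exists>k. 0 < k \<and> k dvd n \<and> S = PL k"
proof -
  have SP: "S \<subseteq> PL n" and S0: "0 \<in> S" and S1: "1 \<in> S"
    and cl: "\<And>x y. x \<in> S \<Longrightarrow> y \<in> S \<Longrightarrow> mv_odot x y \<in> S \<and> mv_oplus x y \<in> S"
    using assms unfolding subuniverse_def by auto
  have "finite S" using finite_subset[OF SP PL_finite] .
  hence fin: "finite (S - {1})" by simp
  have T0: "0 \<in> S - {1}" using S0 by simp
  define b where "b = Max (S - {1})"
  have ne: "S - {1} \<noteq> {}" using T0 by blast
  have bT: "b \<in> S - {1}" unfolding b_def by (rule Max_in[OF fin ne])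
  have bmax: "\<And>y. y \<in> S - {1} \<Longrightarrow> y \<le> b" unfolding b_def by (rule Max_ge[OF fin])
  have rng: "\<And>x. x \<in> S \<Longrightarrow> 0 \<le> x \<and> x \<le> 1" using SP PL_nonneg by (meson subsetD)
  have b1: "b < 1" using bT rng[of b] by auto
  define d where "d = 1 - b"
  have d0: "0 < d" using b1 d_def by simp
  have pos: "y \<ge> d" if "y \<in> S" "y > 0" for y
  proof -
    have "mv_oplus y b \<in> S" using cl that bT by blast
    moreover have "mv_oplus y b > b" using that b1 unfolding mv_oplus_def by simp
    ultimately have "mv_oplus y b = 1" using bmax[of "mv_oplus y b"] by (cases "mv_oplus y b = 1") auto
    thus ?thesis unfolding mv_oplus_def d_def by (simp add: min_def split: if_splits)
  qed
  have down: "x - real j * d \<in> S" if "x \<in> S" "x - real j * d \<ge> 0" for x j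
    using that(2)
  proof (induction j)
    case 0 thus ?case using that by simp
  next
    case (Suc j)
    have "x - real j * d \<ge> 0" using Suc.prems d0 by (simp add: algebra_simps)
    hence "x - real j * d \<in> S" using Suc.IH by blast
    hence "mv_odot (x - real j * d) b \<in> S" using cl bT by blast
    moreover have "mv_odot (x - real j * d) b = x - real (Suc j) * d"
      using Suc.prems unfolding mv_odot_def d_def by (simp add: algebra_simps)
    ultimately show ?case by simp
  qed
  have mult: "\<exists>j. x = real j * d" if "x \<in> S" for x
  proof -
    define j where "j = nat \<lfloor>x / d\<rfloor>"
    have x0: "0 \<le> x" using rng that by blast
    have rj: "real j = of_int \<lfloor>x / d\<rfloor>" unfolding j_def using x0 d0 by simp
    have "real j \<le> x / d" using rj by linarith
    hence a1: "real j * d \<le> x" using d0 by (simp add: field_simps)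
    have "x / d < real j + 1" using rj by linarith
    hence a2: "x < real j * d + d" using d0 by (simp add: field_simps)
    have "x - real j * d \<in> S" using down that a1 by simp
    hence "\<not> (x - real j * d > 0)" using pos a2 by force
    hence "x = real j * d" using a1 by simp
    thus ?thesis by blast
  qed
  obtain k where k: "1 = real k * d" using mult S1 by blast
  have k0: "0 < k" using k by (cases k) auto
  have dk: "d = 1 / real k" using k k0 by (simp add: field_simps)
  have "b \<in> PL n" using bT SP by blast
  then obtain i where i: "i \<le> n" "b = real i / real n" unfolding PL_def by auto
  have "1 \<in> PL n" using S1 SP by blast
  hence n0: "0 < n" unfolding PL_def by (cases n) auto
  have "1 - 1 / real k = real i / real n" using i dk d_def by simp
  hence "real n * real k - real n = real i * real k" using k0 n0
    by (simp add: field_simps)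
  hence "real n = real k * real (n - i)" using i(1) by (simp add: algebra_simps of_nat_diff)
  hence "n = k * (n - i)" by (metis of_nat_eq_iff of_nat_mult)
  hence kd: "k dvd n" by (metis dvd_triv_left)
  have "S = PL k"
  proof
    show "S \<subseteq> PL k"
    proof
      fix x assume x: "x \<in> S"
      then obtain j where j: "x = real j * d" using mult by blast
      hence "real j / real k \<le> 1" using rng x dk by simp
      hence "j \<le> k" using k0 by (simp add: divide_le_eq_1)
      moreover have "x = real j / real k" using j dk by simp
      ultimately show "x \<in> PL k" unfolding PL_def by blast
    qed
  next
    show "PL k \<subseteq> S"
    proof
      fix x assume "x \<in> PL k"
      then obtain i where i: "i \<le> k" "x = real i / real k" unfolding PL_def by auto
      have "1 - real (k - i) * d = 1 - (real k - real i) / real k" using i dk by (simp add: of_nat_diff)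
      also have "\<dots> = real i / real k" using k0 by (simp add: field_simps)
      finally have "1 - real (k - i) * d = x" using i by simp
      moreover have "1 - real (k - i) * d \<ge> 0" using \<open>1 - real (k - i) * d = x\<close> i by simp
      ultimately show "x \<in> S" using down[OF S1] by metis
    qed
  qed
  thus ?thesis using k0 kd by blast
qed

theorem proposition3p2:
  fixes n :: nat
  assumes "n \<ge> 1"
  shows "(\<forall>S. subuniverse n S \<longleftrightarrow>
            (\<exists>k l. 0 < k \<and> 0 < l \<and> n = k * l \<and>
               S = {real (i * l) / real n | i. i \<le> k} \<and>
               S = {real i / real k | i. i \<le> k}))
       \<and> (\<forall>k l. 0 < k \<and> 0 < l \<and> n = k * l \<longrightarrow>
            (\<exists>f. pmv_iso {real (i * l) / real n | i. i \<le> k} (PL k) f))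
       \<and> (\<exists>g. bij_betw g {k. 0 < k \<and> k dvd n} {S. subuniverse n S} \<and>
            (\<forall>k\<in>{k. 0 < k \<and> k dvd n}. \<forall>k'\<in>{k. 0 < k \<and> k dvd n}.
               k dvd k' \<longleftrightarrow> g k \<subseteq> g k'))"
proof (intro conjI allI impI)
  have n0: "0 < n" using assms by simp
  fix S
  show "subuniverse n S \<longleftrightarrow>
            (\<exists>k l. 0 < k \<and> 0 < l \<and> n = k * l \<and>
               S = {real (i * l) / real n | i. i \<le> k} \<and>
               S = {real i / real k | i. i \<le> k})"
  proof
    assume "subuniverse n S"
    then obtain k where k: "0 < k" "k dvd n" "S = PL k" using classify by blast
    then obtain l where l: "n = k * l" by auto
    have "0 < l" using l n0 by (cases l) auto
    thus "\<exists>k l. 0 < k \<and> 0 < l \<and> n = k * l \<and>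
               S = {real (i * l) / real n | i. i \<le> k} \<and>
               S = {real i / real k | i. i \<le> k}"
      using L1[OF k(1) _ l] k l unfolding PL_def by blast
  next
    assume "\<exists>k l. 0 < k \<and> 0 < l \<and> n = k * l \<and>
               S = {real (i * l) / real n | i. i \<le> k} \<and>
               S = {real i / real k | i. i \<le> k}"
    then obtain k l where "0 < k" "n = k * l" "S = PL k" unfolding PL_def by blast
    thus "subuniverse n S" using sub_PL n0 by simp
  qed
next
  fix k l :: nat
  assume h: "0 < k \<and> 0 < l \<and> n = k * l"
  have "pmv_iso (PL k) (PL k) id" unfolding pmv_iso_def by simp
  thus "\<exists>f. pmv_iso {real (i * l) / real n | i. i \<le> k} (PL k) f"
    using L1[of k l n] h by auto
next
  have n0: "0 < n" using assms by simp
  have "bij_betw PL {k. 0 < k \<and> k dvd n} {S. subuniverse n S}"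
    unfolding bij_betw_def
  proof
    show "inj_on PL {k. 0 < k \<and> k dvd n}"
    proof (rule inj_onI)
      fix x y assume "x \<in> {k. 0 < k \<and> k dvd n}" "y \<in> {k. 0 < k \<and> k dvd n}" "PL x = PL y"
      hence "x dvd y" "y dvd x" using PL_dvd by auto
      thus "x = y" using dvd_antisym by blast
    qed
    show "PL ` {k. 0 < k \<and> k dvd n} = {S. subuniverse n S}"
      using classify sub_PL n0 by auto
  qed
  moreover have "\<forall>k\<in>{k. 0 < k \<and> k dvd n}. \<forall>k'\<in>{k. 0 < k \<and> k dvd n}.
               k dvd k' \<longleftrightarrow> PL k \<subseteq> PL k'" using PL_dvd by auto
  ultimately show "\<exists>g. bij_betw g {k. 0 < k \<and> k dvd n} {S. subuniverse n S} \<and>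
            (\<forall>k\<in>{k. 0 < k \<and> k dvd n}. \<forall>k'\<in>{k. 0 < k \<and> k dvd n}.
               k dvd k' \<longleftrightarrow> g k \<subseteq> g k')" by blast
qed

end
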